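(* Let $A=\bigoplus_{j=1}^K C(\mathbb T)\otimes M_{n_j}$ and $B=\bigoplus_{i=1}^L C(\mathbb T)\otimes M_{\ell_i}$, and let $\varphi:A\to B$ be a $*$-homomorphism of Type A with multiplicity constants $(a_{i,j})$. Then $\varphi$ is homotopic to a $*$-homomorphism $\psi:A\to B$ of Type B with the same multiplicity constants $(a_{i,j})$.
   Context: Identify $C(\mathbb T)$ with $\{f\in C([0,1]):f(0)=f(1)\}$ via $t\mapsto e^{2\pi i t}$; thus elements of $C(\mathbb T)\otimes M_n$ are continuous $f:[0,1]\to M_n$ with $f(0)=f(1)$, and for $z\in\mathbb T$, $f(z)\in M_n$ denotes the value at the point $z$. $\Sigma_a$ is the symmetric group; for $\sigma\in\Sigma_a$, $v_\sigma\in\mathcal U_a$ is the permutation matrix with $v_\sigma\,\mathrm{diag}(x_1,\dots,x_a)\,v_\sigma^*=\mathrm{diag}(x_{\sigma^{-1}(1)},\dots,x_{\sigma^{-1}(a)})$. Elementary Type A maps: a $*$-homomorphism $\varphi:C(\mathbb T)\otimes M_n\to C(\mathbb T)\otimes M_\ell$ is of Type A if there is a data tuple $(a,\sigma,\lambda_1,\dots,\lambda_a,w)$ with $a\in\mathbb N_0$, $na\le\ell$, $\sigma\in\Sigma_a$, continuous $\lambda_p:[0,1]\to\mathbb T$ with $\lambda_{\sigma(p)}(0)=\lambda_p(1)$ for all $p$, and a continuous path $w:[0,1]\to\mathcal U_a$ with $w(0)=I_a$, $w(1)=v_\sigma$, such that, with $u(t)=\mathrm{diag}(w(t)\otimes I_n,I_{\ell-na})$,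 $\varphi(f)(t)=u(t)\,\mathrm{diag}(f(\lambda_1(t)),\dots,f(\lambda_a(t)),0_{\ell-na})\,u(t)^*$ for $t\in[0,1]$. The number $a$ is the multiplicity. It is of Type B if moreover $\sigma$ is the identity permutation; of Type C if it is of Type B and $w\equiv I_a$; of Type D if it is of Type C and $\lambda_p(0)=\lambda_p(1)=1$ for every $p$. General case: for $A,B$ as in the claim, $\varphi:A\to B$ is of Type A if $\varphi=(\varphi_1,\dots,\varphi_L)$ with $\varphi_i(g_1,\dots,g_K)=\mathrm{diag}(\varphi_{i,1}(g_1),\dots,\varphi_{i,K}(g_K),0,\dots,0)$, where each $\varphi_{i,j}:C(\mathbb T)\otimes M_{n_j}\to C(\mathbb T)\otimes M_{a_{i,j}n_j}$ is an elementary Type A map of multiplicity $a_{i,j}$ and $\sum_j a_{i,j}n_j\le\ell_i$; the $a_{i,j}$ are the multiplicity constants. $\varphi$ is of Type B (resp. C, D) if every $\varphi_{i,j}$ is. Two $*$-homomorphisms $\varphi_0,\varphi_1:A\to B$ are homotopic if there is a family $(\varphi_s)_{s\in[0,1]}$ of $*$-homomorphisms $A\to B$ with $s\mapsto\varphi_s(x)$ norm continuous for every $x\in A$. *)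

theory Defs
  imports "HOL-Analysis.Analysis"
begin

text \<open>Matrices in M_m are represented as functions nat => nat => complex that vanish
outside the index range {0..<m}. An element of the direct sum of K copies of
C(T) tensor M_(n j) is a function g with g j t the value of the j-th summand at the
parameter t in [0,1]; it vanishes for j >= K and for t outside [0,1].\<close>

type_synonym cmat = "nat \<Rightarrow> nat \<Rightarrow> complex"
type_synonym celt = "nat \<Rightarrow> real \<Rightarrow> cmat"

definition mat_in :: "nat \<Rightarrow> cmat \<Rightarrow> bool" where
  "mat_in m M \<longleftrightarrow> (\<forall>i j. (m \<le> i \<or> m \<le> j) \<longrightarrow> M i j = 0)"

definition mzero :: cmat where "mzero = (\<lambda>i j. 0)"

definition ident :: "nat \<Rightarrow> cmat" where
  "ident m = (\<lambda>i j. if i < m \<and> i = j then 1 else 0)"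

definition mmult :: "nat \<Rightarrow> cmat \<Rightarrow> cmat \<Rightarrow> cmat" where
  "mmult m M N = (\<lambda>i j. if i < m \<and> j < m then (\<Sum>k<m. M i k * N k j) else 0)"

definition madj :: "cmat \<Rightarrow> cmat" where
  "madj M = (\<lambda>i j. cnj (M j i))"

definition unitary_mat :: "nat \<Rightarrow> cmat \<Rightarrow> bool" where
  "unitary_mat m U \<longleftrightarrow> mat_in m U \<and> mmult m U (madj U) = ident m \<and> mmult m (madj U) U = ident m"

text \<open>permutation matrix v_sigma: v_sigma diag(x) v_sigma^* = diag(x_(sigma^-1 1),...)\<close>
definition permmat :: "nat \<Rightarrow> (nat \<Rightarrow> nat) \<Rightarrow> cmat" where
  "permmat a \<sigma> = (\<lambda>i j. if i < a \<and> j < a \<and> i = \<sigma> j then 1 else 0)"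

definition alg_carrier :: "nat \<Rightarrow> (nat \<Rightarrow> nat) \<Rightarrow> celt set" where
  "alg_carrier K n = {g. (\<forall>j t. (K \<le> j \<or> t \<notin> {0..1}) \<longrightarrow> g j t = mzero) \<and>
     (\<forall>j<K. (\<forall>t. mat_in (n j) (g j t)) \<and>
            (\<forall>r s. continuous_on {0..1} (\<lambda>t. g j t r s)) \<and> g j 0 = g j 1)}"

definition alg_add :: "celt \<Rightarrow> celt \<Rightarrow> celt" where
  "alg_add g h = (\<lambda>j t r s. g j t r s + h j t r s)"

definition alg_smult :: "complex \<Rightarrow> celt \<Rightarrow> celt" where
  "alg_smult c g = (\<lambda>j t r s. c * g j t r s)"

definition alg_mult :: "(nat \<Rightarrow> nat) \<Rightarrow> celt \<Rightarrow> celt \<Rightarrow> celt" where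
  "alg_mult n g h = (\<lambda>j t. mmult (n j) (g j t) (h j t))"

definition alg_star :: "celt \<Rightarrow> celt" where
  "alg_star g = (\<lambda>j t. madj (g j t))"

definition star_hom :: "nat \<Rightarrow> (nat \<Rightarrow> nat) \<Rightarrow> nat \<Rightarrow> (nat \<Rightarrow> nat) \<Rightarrow> (celt \<Rightarrow> celt) \<Rightarrow> bool" where
  "star_hom K n L ls \<phi> \<longleftrightarrow>
     (\<forall>x\<in>alg_carrier K n. \<phi> x \<in> alg_carrier L ls) \<and>
     (\<forall>x\<in>alg_carrier K n. \<forall>y\<in>alg_carrier K n.
         \<phi> (alg_add x y) = alg_add (\<phi> x) (\<phi> y) \<and>
         \<phi> (alg_mult n x y) = alg_mult ls (\<phi> x) (\<phi> y)) \<and>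
     (\<forall>x\<in>alg_carrier K n. \<forall>c. \<phi> (alg_smult c x) = alg_smult c (\<phi> x)) \<and>
     (\<forall>x\<in>alg_carrier K n. \<phi> (alg_star x) = alg_star (\<phi> x))"

definition vnorm :: "nat \<Rightarrow> (nat \<Rightarrow> complex) \<Rightarrow> real" where
  "vnorm m v = sqrt (\<Sum>i<m. (cmod (v i))\<^sup>2)"

definition mvmult :: "nat \<Rightarrow> cmat \<Rightarrow> (nat \<Rightarrow> complex) \<Rightarrow> (nat \<Rightarrow> complex)" where
  "mvmult m M v = (\<lambda>i. \<Sum>k<m. M i k * v k)"

definition opnorm :: "nat \<Rightarrow> cmat \<Rightarrow> real" where
  "opnorm m M = Sup {vnorm m (mvmult m M v) | v. vnorm m v \<le> 1}"

definition alg_norm :: "nat \<Rightarrow> (nat \<Rightarrow> nat) \<Rightarrow> celt \<Rightarrow> real" where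
  "alg_norm L ls y = Sup ({opnorm (ls i) (y i t) | i t. i < L \<and> t \<in> {0..1}} \<union> {0})"

definition homotopic :: "nat \<Rightarrow> (nat \<Rightarrow> nat) \<Rightarrow> nat \<Rightarrow> (nat \<Rightarrow> nat) \<Rightarrow>
    (celt \<Rightarrow> celt) \<Rightarrow> (celt \<Rightarrow> celt) \<Rightarrow> bool" where
  "homotopic K n L ls \<phi>0 \<phi>1 \<longleftrightarrow>
     (\<exists>\<Phi> :: real \<Rightarrow> celt \<Rightarrow> celt.
        (\<forall>s\<in>{0..1}. star_hom K n L ls (\<Phi> s)) \<and>
        (\<forall>x\<in>alg_carrier K n. \<Phi> 0 x = \<phi>0 x \<and> \<Phi> 1 x = \<phi>1 x) \<and>
        (\<forall>x\<in>alg_carrier K n. \<forall>s0\<in>{0..1}. \<forall>\<epsilon>>0. \<exists>\<delta>>0. \<forall>s\<in>{0..1}.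
            \<bar>s - s0\<bar> < \<delta> \<longrightarrow>
            alg_norm L ls (alg_add (\<Phi> s x) (alg_smult (-1) (\<Phi> s0 x))) < \<epsilon>))"

text \<open>Evaluation of f in C(T) tensor M_n (as a loop on [0,1]) at a point z of the circle:
  z = exp(2 pi i s) with s in [0,1).\<close>
definition Tparam :: "complex \<Rightarrow> real" where
  "Tparam z = frac (Arg z / (2 * pi))"

definition evalT :: "(real \<Rightarrow> cmat) \<Rightarrow> complex \<Rightarrow> cmat" where
  "evalT f z = f (Tparam z)"

text \<open>Data (a, sigma, lambda_1..lambda_a, w) of an elementary Type A map (indices from 0)\<close>
definition elem_data :: "nat \<Rightarrow> (nat \<Rightarrow> nat) \<Rightarrow> (nat \<Rightarrow> real \<Rightarrow> complex) \<Rightarrow> (real \<Rightarrow> cmat) \<Rightarrow> bool" where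
  "elem_data a \<sigma> lam w \<longleftrightarrow>
     \<sigma> permutes {..<a} \<and>
     (\<forall>p<a. continuous_on {0..1} (lam p) \<and> (\<forall>t\<in>{0..1}. cmod (lam p t) = 1)) \<and>
     (\<forall>p<a. lam (\<sigma> p) 0 = lam p 1) \<and>
     (\<forall>r s. continuous_on {0..1} (\<lambda>t. w t r s)) \<and>
     (\<forall>t\<in>{0..1}. unitary_mat a (w t)) \<and>
     w 0 = ident a \<and> w 1 = permmat a \<sigma>"

text \<open>w tensor I_n, with index (p,r) of C^a tensor C^n identified with p*n+r\<close>
definition kron_id :: "nat \<Rightarrow> nat \<Rightarrow> cmat \<Rightarrow> cmat" where
  "kron_id n a W = (\<lambda>i j. if i < a * n \<and> j < a * n \<and> i mod n = j mod n
                            then W (i div n) (j div n) else 0)"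

definition diag_blocks :: "nat \<Rightarrow> nat \<Rightarrow> (nat \<Rightarrow> real \<Rightarrow> complex) \<Rightarrow> (real \<Rightarrow> cmat) \<Rightarrow> real \<Rightarrow> cmat" where
  "diag_blocks n a lam f t = (\<lambda>i j. if i < a * n \<and> j < a * n \<and> i div n = j div n
                          then evalT f (lam (i div n) t) (i mod n) (j mod n) else 0)"

definition elem_map :: "nat \<Rightarrow> nat \<Rightarrow> (nat \<Rightarrow> real \<Rightarrow> complex) \<Rightarrow> (real \<Rightarrow> cmat) \<Rightarrow>
    (real \<Rightarrow> cmat) \<Rightarrow> real \<Rightarrow> cmat" where
  "elem_map n a lam w f t =
     mmult (a * n) (mmult (a * n) (kron_id n a (w t)) (diag_blocks n a lam f t))
                   (madj (kron_id n a (w t)))"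

definition embed_block :: "nat \<Rightarrow> cmat \<Rightarrow> cmat" where
  "embed_block off M = (\<lambda>r s. if off \<le> r \<and> off \<le> s then M (r - off) (s - off) else 0)"

definition block_off :: "nat \<Rightarrow> (nat \<Rightarrow> nat) \<Rightarrow> (nat \<Rightarrow> nat \<Rightarrow> nat) \<Rightarrow> nat \<Rightarrow> nat \<Rightarrow> nat" where
  "block_off K n a i j = (\<Sum>j'<j. a i j' * n j')"

definition typeA_map :: "nat \<Rightarrow> (nat \<Rightarrow> nat) \<Rightarrow> nat \<Rightarrow> (nat \<Rightarrow> nat \<Rightarrow> nat) \<Rightarrow>
    (nat \<Rightarrow> nat \<Rightarrow> nat \<Rightarrow> real \<Rightarrow> complex) \<Rightarrow> (nat \<Rightarrow> nat \<Rightarrow> real \<Rightarrow> cmat) \<Rightarrow> celt \<Rightarrow> celt" where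
  "typeA_map K n L a lam w x = (\<lambda>i t.
     if i < L \<and> t \<in> {0..1} then
       (\<lambda>r s. \<Sum>j<K. embed_block (block_off K n a i j)
                        (elem_map (n j) (a i j) (lam i j) (w i j) (x j) t) r s)
     else mzero)"

definition is_typeA :: "nat \<Rightarrow> (nat \<Rightarrow> nat) \<Rightarrow> nat \<Rightarrow> (nat \<Rightarrow> nat) \<Rightarrow>
    (nat \<Rightarrow> nat \<Rightarrow> nat) \<Rightarrow> (celt \<Rightarrow> celt) \<Rightarrow> bool" where
  "is_typeA K n L ls a \<phi> \<longleftrightarrow>
     star_hom K n L ls \<phi> \<and> (\<forall>i<L. (\<Sum>j<K. a i j * n j) \<le> ls i) \<and>
     (\<exists>\<sigma> lam w. (\<forall>i<L. \<forall>j<K. elem_data (a i j) (\<sigma> i j) (lam i j) (w i j)) \<and>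
        (\<forall>x\<in>alg_carrier K n. \<phi> x = typeA_map K n L a lam w x))"

definition is_typeB :: "nat \<Rightarrow> (nat \<Rightarrow> nat) \<Rightarrow> nat \<Rightarrow> (nat \<Rightarrow> nat) \<Rightarrow>
    (nat \<Rightarrow> nat \<Rightarrow> nat) \<Rightarrow> (celt \<Rightarrow> celt) \<Rightarrow> bool" where
  "is_typeB K n L ls a \<phi> \<longleftrightarrow>
     star_hom K n L ls \<phi> \<and> (\<forall>i<L. (\<Sum>j<K. a i j * n j) \<le> ls i) \<and>
     (\<exists>lam w. (\<forall>i<L. \<forall>j<K. elem_data (a i j) id (lam i j) (w i j)) \<and>
        (\<forall>x\<in>alg_carrier K n. \<phi> x = typeA_map K n L a lam w x))"

end

theory Submission
  imports Defs
begin


lemma sum_split_mult: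
  fixes a n :: nat
  shows "(\<Sum>k<a*n. f k) = (\<Sum>q<a. \<Sum>r<n. f (q*n+r)::'a::comm_monoid_add)"
proof (induction a)
  case 0 then show ?case by simp
next
  case (Suc a)
  have "{..<Suc a * n} = {..<a*n} \<union> {a*n..<a*n+n}" by auto
  then have "(\<Sum>k<Suc a*n. f k) = (\<Sum>k<a*n. f k) + (\<Sum>k\<in>{a*n..<a*n+n}. f k)"
    by (simp add: sum.union_disjoint ivl_disj_int)
  also have "(\<Sum>k\<in>{a*n..<a*n+n}. f k) = (\<Sum>r<n. f (a*n+r))"
    using sum.shift_bounds_nat_ivl[of f 0 "a*n" n] by (simp add: lessThan_atLeast0 add.commute)
  finally show ?case using Suc by simp
qed

lemma divmod_lt: fixes q r n a :: nat
  assumes "q < a" "r < n" shows "q*n+r < a*n" "(q*n+r) div n = q" "(q*n+r) mod n = r"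
proof -
  have "q*n + r < q*n + n" using assms by simp
  also have "\<dots> = (q+1)*n" by simp
  also have "\<dots> \<le> a*n" using assms by (intro mult_right_mono) auto
  finally show "q*n+r < a*n" .
  show "(q*n+r) div n = q" "(q*n+r) mod n = r" using assms by auto
qed

lemma lt_divmod: fixes i a n :: nat assumes "i < a*n" shows "i div n < a" "i mod n < n"
  using assms
  apply (metis less_mult_imp_div_less)
  using assms by (metis mod_less_divisor mult_0_right nat_0_less_mult_iff neq0_conv not_less0)

lemma mmult_assoc: "mmult m (mmult m A B) C = mmult m A (mmult m B C)"
  unfolding mmult_def
  by (auto intro!: ext simp: sum_distrib_left sum_distrib_right mult.assoc intro: sum.swap)

lemma madj_mmult: "madj (mmult m A B) = mmult m (madj B) (madj A)"
  unfolding mmult_def madj_def by (auto intro!: ext simp: mult.commute)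

lemma madj_madj[simp]: "madj (madj A) = A"
  unfolding madj_def by auto

lemma mat_in_mmult: "mat_in m (mmult m A B)"
  unfolding mat_in_def mmult_def by auto

lemma mat_in_madj: "mat_in m A \<Longrightarrow> mat_in m (madj A)"
  unfolding mat_in_def madj_def by auto

lemma mat_in_ident: "mat_in m (ident m)"
  unfolding mat_in_def ident_def by auto

lemma mmult_ident_left: "mat_in m A \<Longrightarrow> mmult m (ident m) A = A"
  unfolding mat_in_def mmult_def ident_def
  by (auto intro!: ext simp: if_distrib[of "\<lambda>x. x * _"] sum.delta cong: if_cong)

lemma mmult_ident_right: "mat_in m A \<Longrightarrow> mmult m A (ident m) = A"
  unfolding mat_in_def mmult_def ident_def
  by (auto intro!: ext simp: if_distrib[of "\<lambda>x. _ * x"] sum.delta cong: if_cong)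

lemma madj_ident: "madj (ident m) = ident m"
  unfolding madj_def ident_def by (auto intro!: ext)

lemma mmult_zero_left[simp]: "mmult m mzero B = mzero" and mmult_zero_right[simp]: "mmult m A mzero = mzero"
  unfolding mmult_def mzero_def by (auto intro!: ext)

lemma madj_zero[simp]: "madj mzero = mzero" unfolding madj_def mzero_def by auto

lemma dm_div[simp]: "r < (n::nat) \<Longrightarrow> (q*n+r) div n = q" by auto
lemma dm_mod[simp]: "r < (n::nat) \<Longrightarrow> (q*n+r) mod n = r" by auto
lemma dm_lt[simp]: "q < (a::nat) \<Longrightarrow> r < n \<Longrightarrow> q*n+r < a*n" using divmod_lt by blast

definition dg :: "nat \<Rightarrow> nat \<Rightarrow> (nat \<Rightarrow> complex) \<Rightarrow> (real \<Rightarrow> cmat) \<Rightarrow> cmat" where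
 "dg n a Lv f = (\<lambda>i j. if i < a*n \<and> j < a*n \<and> i div n = j div n
        then evalT f (Lv (i div n)) (i mod n) (j mod n) else 0)"

definition em :: "nat \<Rightarrow> nat \<Rightarrow> (nat \<Rightarrow> complex) \<Rightarrow> cmat \<Rightarrow> (real \<Rightarrow> cmat) \<Rightarrow> cmat" where
 "em n a Lv Wv f = mmult (a*n) (mmult (a*n) (kron_id n a Wv) (dg n a Lv f)) (madj (kron_id n a Wv))"

lemma elem_map_em: "elem_map n a lam w f t = em n a (\<lambda>p. lam p t) (w t) f"
  unfolding elem_map_def em_def diag_blocks_def dg_def by simp

lemma kron_mult: "mmult (a*n) (kron_id n a W) (kron_id n a V) = kron_id n a (mmult a W V)"
proof (intro ext)
  fix i j
  show "mmult (a*n) (kron_id n a W) (kron_id n a V) i j = kron_id n a (mmult a W V) i j"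
  proof (cases "i < a*n \<and> j < a*n")
    case True
    then have ij: "i div n < a" "j div n < a" "i mod n < n" "j mod n < n" using lt_divmod by auto
    have "mmult (a*n) (kron_id n a W) (kron_id n a V) i j
       = (\<Sum>q<a. \<Sum>r<n. kron_id n a W i (q*n+r) * kron_id n a V (q*n+r) j)"
      using True by (simp add: mmult_def sum_split_mult)
    also have "\<dots> = (\<Sum>q<a. \<Sum>r<n. if r = i mod n \<and> i mod n = j mod n then W (i div n) q * V q (j div n) else 0)"
      using True by (intro sum.cong refl) (auto simp: kron_id_def)
    also have "\<dots> = (\<Sum>q<a. if i mod n = j mod n then W (i div n) q * V q (j div n) else 0)"
      using ij by (intro sum.cong refl) (auto simp: sum.delta')
    also have "\<dots> = kron_id n a (mmult a W V) i j"
      using True ij by (auto simp: kron_id_def mmult_def)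
    finally show ?thesis .
  qed (auto simp: mmult_def kron_id_def)
qed

lemma dg_mult: "mmult (a*n) (dg n a Lv f) (dg n a Lv g) = dg n a Lv (\<lambda>t. mmult n (f t) (g t))"
proof (intro ext)
  fix i j
  show "mmult (a*n) (dg n a Lv f) (dg n a Lv g) i j = dg n a Lv (\<lambda>t. mmult n (f t) (g t)) i j"
  proof (cases "i < a*n \<and> j < a*n")
    case True
    then have ij: "i div n < a" "j div n < a" "i mod n < n" "j mod n < n" using lt_divmod by auto
    have "mmult (a*n) (dg n a Lv f) (dg n a Lv g) i j
       = (\<Sum>q<a. \<Sum>r<n. dg n a Lv f i (q*n+r) * dg n a Lv g (q*n+r) j)"
      using True by (simp add: mmult_def sum_split_mult)
    also have "\<dots> = (\<Sum>q<a. if q = i div n \<and> i div n = j div n then (\<Sum>r<n. 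
         evalT f (Lv (i div n)) (i mod n) r * evalT g (Lv (i div n)) r (j mod n)) else 0)"
      using True by (intro sum.cong refl) (auto simp: dg_def intro!: sum.neutral)
    also have "\<dots> = (if i div n = j div n then (\<Sum>r<n. 
         evalT f (Lv (i div n)) (i mod n) r * evalT g (Lv (i div n)) r (j mod n)) else 0)"
      using ij by (auto simp: sum.delta')
    also have "\<dots> = dg n a Lv (\<lambda>t. mmult n (f t) (g t)) i j"
      using True ij by (auto simp: dg_def mmult_def evalT_def)
    finally show ?thesis .
  qed (auto simp: mmult_def dg_def)
qed

lemma madj_kron: "madj (kron_id n a W) = kron_id n a (madj W)"
  unfolding madj_def kron_id_def by (auto intro!: ext)

lemma madj_dg: "madj (dg n a Lv f) = dg n a Lv (\<lambda>t. madj (f t))"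
  unfolding madj_def dg_def evalT_def by (auto intro!: ext)

lemma kron_ident: "kron_id n a (ident a) = ident (a*n)"
  unfolding kron_id_def ident_def
  apply (auto intro!: ext simp: less_mult_imp_div_less)
  by (metis div_mult_mod_eq)

lemma mat_in_kron: "mat_in (a*n) (kron_id n a W)"
  unfolding mat_in_def kron_id_def by auto

lemma mat_in_dg: "mat_in (a*n) (dg n a Lv f)"
  unfolding mat_in_def dg_def by auto

lemma mat_in_em: "mat_in (a*n) (em n a Lv W f)"
  unfolding em_def by (rule mat_in_mmult)

definition madd :: "cmat \<Rightarrow> cmat \<Rightarrow> cmat" where "madd A B = (\<lambda>r s. A r s + B r s)"
definition msc :: "complex \<Rightarrow> cmat \<Rightarrow> cmat" where "msc c A = (\<lambda>r s. c * A r s)"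

lemma mmult_add_left: "mmult m (madd A B) C = madd (mmult m A C) (mmult m B C)"
  unfolding mmult_def madd_def by (auto intro!: ext simp: distrib_right sum.distrib)
lemma mmult_add_right: "mmult m C (madd A B) = madd (mmult m C A) (mmult m C B)"
  unfolding mmult_def madd_def by (auto intro!: ext simp: distrib_left sum.distrib)
lemma mmult_sc_left: "mmult m (msc c A) B = msc c (mmult m A B)"
  unfolding mmult_def msc_def by (auto intro!: ext simp: sum_distrib_left mult.assoc)
lemma mmult_sc_right: "mmult m B (msc c A) = msc c (mmult m B A)"
  unfolding mmult_def msc_def by (auto intro!: ext simp: sum_distrib_left mult.left_commute)
lemma dg_add: "dg n a Lv (\<lambda>t r s. f t r s + g t r s) = madd (dg n a Lv f) (dg n a Lv g)"
  unfolding dg_def madd_def evalT_def by (auto intro!: ext)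
lemma dg_sc: "dg n a Lv (\<lambda>t r s. c * f t r s) = msc c (dg n a Lv f)"
  unfolding dg_def msc_def evalT_def by (auto intro!: ext)

lemma em_add: "em n a Lv W (\<lambda>t r s. f t r s + g t r s) = madd (em n a Lv W f) (em n a Lv W g)"
  unfolding em_def dg_add mmult_add_left mmult_add_right ..
lemma em_sc: "em n a Lv W (\<lambda>t r s. c * f t r s) = msc c (em n a Lv W f)"
  unfolding em_def dg_sc mmult_sc_left mmult_sc_right ..

lemma em_adj: "madj (em n a Lv W f) = em n a Lv W (\<lambda>t. madj (f t))"
  unfolding em_def madj_mmult madj_madj madj_dg mmult_assoc ..

lemma em_mult:
  assumes "mmult a (madj W) W = ident a"
  shows "mmult (a*n) (em n a Lv W f) (em n a Lv W g) = em n a Lv W (\<lambda>t. mmult n (f t) (g t))"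
proof -
  let ?K = "kron_id n a W" and ?m = "a*n"
  have KK: "mmult ?m (madj ?K) ?K = ident ?m"
    unfolding madj_kron kron_mult assms kron_ident ..
  have "mmult ?m (em n a Lv W f) (em n a Lv W g)
     = mmult ?m ?K (mmult ?m (dg n a Lv f) (mmult ?m (mmult ?m (madj ?K) ?K) (mmult ?m (dg n a Lv g) (madj ?K))))"
    unfolding em_def mmult_assoc ..
  also have "\<dots> = mmult ?m ?K (mmult ?m (mmult ?m (dg n a Lv f) (dg n a Lv g)) (madj ?K))"
    unfolding KK mmult_ident_left[OF mat_in_mmult] mmult_assoc ..
  also have "\<dots> = em n a Lv W (\<lambda>t. mmult n (f t) (g t))"
    unfolding dg_mult em_def mmult_assoc ..
  finally show ?thesis .
qed

lemma em_comm:
  assumes "mmult (a*n) (kron_id n a W) (dg n a Lv1 f) = mmult (a*n) (dg n a Lv0 f) (kron_id n a W)"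
    and "mmult a W (madj W) = ident a"
  shows "em n a Lv1 W f = dg n a Lv0 f"
proof -
  let ?K = "kron_id n a W" and ?m = "a*n"
  have KK: "mmult ?m ?K (madj ?K) = ident ?m"
    unfolding madj_kron kron_mult assms kron_ident ..
  show ?thesis unfolding em_def assms(1) mmult_assoc KK mmult_ident_right[OF mat_in_dg] ..
qed

lemma sum2_delta: "(A::nat) < a \<Longrightarrow> (B::nat) < n \<Longrightarrow> (\<Sum>q<a. \<Sum>r<n. if q = A \<and> r = B then X else 0) = (X::complex)"
proof -
  assume "A < a" "B < n"
  have "(\<Sum>q<a. \<Sum>r<n. if q = A \<and> r = B then X else 0) = (\<Sum>q<a. if q = A then (\<Sum>r<n. if r = B then X else 0) else 0)"
    by (intro sum.cong refl) auto
  also have "\<dots> = X" using \<open>A < a\<close> \<open>B < n\<close> by (simp add: sum.delta')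
  finally show ?thesis .
qed

lemma kron_dg_comm_const:
  assumes "\<forall>q<a. Lv q = c"
  shows "mmult (a*n) (kron_id n a W) (dg n a Lv f) = mmult (a*n) (dg n a Lv f) (kron_id n a W)"
proof (intro ext)
  fix i j
  show "mmult (a*n) (kron_id n a W) (dg n a Lv f) i j = mmult (a*n) (dg n a Lv f) (kron_id n a W) i j"
  proof (cases "i < a*n \<and> j < a*n")
    case True
    then have ij: "i div n < a" "j div n < a" "i mod n < n" "j mod n < n" using lt_divmod by auto
    have "mmult (a*n) (kron_id n a W) (dg n a Lv f) i j
       = (\<Sum>q<a. \<Sum>r<n. kron_id n a W i (q*n+r) * dg n a Lv f (q*n+r) j)"
      using True by (simp add: mmult_def sum_split_mult)
    also have "\<dots> = (\<Sum>q<a. \<Sum>r<n. if q = j div n \<and> r = i mod n then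
         W (i div n) (j div n) * evalT f c (i mod n) (j mod n) else 0)"
      using True assms by (intro sum.cong refl) (auto simp: dg_def kron_id_def)
    also have "\<dots> = W (i div n) (j div n) * evalT f c (i mod n) (j mod n)"
      using ij by (simp add: sum2_delta)
    finally have L: "mmult (a*n) (kron_id n a W) (dg n a Lv f) i j = W (i div n) (j div n) * evalT f c (i mod n) (j mod n)" .
    have "mmult (a*n) (dg n a Lv f) (kron_id n a W) i j
       = (\<Sum>q<a. \<Sum>r<n. dg n a Lv f i (q*n+r) * kron_id n a W (q*n+r) j)"
      using True by (simp add: mmult_def sum_split_mult)
    also have "\<dots> = (\<Sum>q<a. \<Sum>r<n. if q = i div n \<and> r = j mod n then
         W (i div n) (j div n) * evalT f c (i mod n) (j mod n) else 0)"
      using True assms ij by (intro sum.cong refl) (auto simp: dg_def kron_id_def)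
    also have "\<dots> = W (i div n) (j div n) * evalT f c (i mod n) (j mod n)"
      using ij by (simp add: sum2_delta)
    finally show ?thesis using L by simp
  qed (auto simp: mmult_def)
qed

lemma kron_dg_comm_perm:
  assumes "\<forall>q<a. Lv1 q = Lv0 (\<sigma> q)" "\<sigma> permutes {..<a}"
  shows "mmult (a*n) (kron_id n a (permmat a \<sigma>)) (dg n a Lv1 f) = mmult (a*n) (dg n a Lv0 f) (kron_id n a (permmat a \<sigma>))"
proof (intro ext)
  fix i j
  have sa: "\<And>q. q < a \<Longrightarrow> \<sigma> q < a" using assms(2) by (meson lessThan_iff permutes_in_image)
  show "mmult (a*n) (kron_id n a (permmat a \<sigma>)) (dg n a Lv1 f) i j = mmult (a*n) (dg n a Lv0 f) (kron_id n a (permmat a \<sigma>)) i j"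
  proof (cases "i < a*n \<and> j < a*n")
    case True
    then have ij: "i div n < a" "j div n < a" "i mod n < n" "j mod n < n" using lt_divmod by auto
    have "mmult (a*n) (kron_id n a (permmat a \<sigma>)) (dg n a Lv1 f) i j
       = (\<Sum>q<a. \<Sum>r<n. kron_id n a (permmat a \<sigma>) i (q*n+r) * dg n a Lv1 f (q*n+r) j)"
      using True by (simp add: mmult_def sum_split_mult)
    also have "\<dots> = (\<Sum>q<a. \<Sum>r<n. if q = j div n \<and> r = i mod n then
         (if i div n = \<sigma> (j div n) then evalT f (Lv0 (\<sigma> (j div n))) (i mod n) (j mod n) else 0) else 0)"
      using True assms ij sa by (intro sum.cong refl) (auto simp: dg_def kron_id_def permmat_def)
    also have "\<dots> = (if i div n = \<sigma> (j div n) then evalT f (Lv0 (\<sigma> (j div n))) (i mod n) (j mod n) else 0)"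
      using ij by (simp add: sum2_delta)
    finally have L: "mmult (a*n) (kron_id n a (permmat a \<sigma>)) (dg n a Lv1 f) i j = 
       (if i div n = \<sigma> (j div n) then evalT f (Lv0 (\<sigma> (j div n))) (i mod n) (j mod n) else 0)" .
    have "mmult (a*n) (dg n a Lv0 f) (kron_id n a (permmat a \<sigma>)) i j
       = (\<Sum>q<a. \<Sum>r<n. dg n a Lv0 f i (q*n+r) * kron_id n a (permmat a \<sigma>) (q*n+r) j)"
      using True by (simp add: mmult_def sum_split_mult)
    also have "\<dots> = (\<Sum>q<a. \<Sum>r<n. if q = i div n \<and> r = j mod n then
         (if i div n = \<sigma> (j div n) then evalT f (Lv0 (\<sigma> (j div n))) (i mod n) (j mod n) else 0) else 0)"
      using True assms ij sa by (intro sum.cong refl) (auto simp: dg_def kron_id_def permmat_def)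
    also have "\<dots> = (if i div n = \<sigma> (j div n) then evalT f (Lv0 (\<sigma> (j div n))) (i mod n) (j mod n) else 0)"
      using ij by (simp add: sum2_delta)
    finally show ?thesis using L by simp
  qed (auto simp: mmult_def)
qed

lemma eb_zero: "mat_in m A \<Longrightarrow> \<not> (off \<le> r \<and> r < off + m \<and> off \<le> s \<and> s < off + m) \<Longrightarrow> embed_block off A r s = 0"
  unfolding mat_in_def embed_block_def by auto

lemma eb_mult:
  assumes A: "mat_in m A" and B: "mat_in m B" and N: "off + m \<le> N"
  shows "(\<Sum>k<N. embed_block off A r k * embed_block off B k c) = embed_block off (mmult m A B) r c"
proof -
  have "(\<Sum>k<N. embed_block off A r k * embed_block off B k c) = (\<Sum>k\<in>{off..<off+m}. embed_block off A r k * embed_block off B k c)"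
    using N A B by (intro sum.mono_neutral_right) (auto simp: eb_zero)
  also have "\<dots> = (\<Sum>k<m. embed_block off A r (off+k) * embed_block off B (off+k) c)"
    using sum.shift_bounds_nat_ivl[of "\<lambda>k. embed_block off A r k * embed_block off B k c" 0 off m]
    by (simp add: lessThan_atLeast0 add.commute)
  also have "\<dots> = embed_block off (mmult m A B) r c"
    using A B unfolding embed_block_def mmult_def mat_in_def by auto
  finally show ?thesis .
qed

lemma eb_disj:
  assumes "mat_in m A" "mat_in m' B" "off + m \<le> off' \<or> off' + m' \<le> off"
  shows "embed_block off A r k * embed_block off' B k c = 0"
  using assms eb_zero[of m A off r k] eb_zero[of m' B off' k c] by (cases "off \<le> k \<and> k < off + m") auto

definition bsum :: "nat \<Rightarrow> (nat \<Rightarrow> nat) \<Rightarrow> (nat \<Rightarrow> cmat) \<Rightarrow> cmat" where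
  "bsum K m Ms = (\<lambda>r s. \<Sum>j<K. embed_block (\<Sum>j'<j. m j') (Ms j) r s)"

lemma off_mono: "j \<le> j' \<Longrightarrow> (\<Sum>i<j. m i) \<le> (\<Sum>i<j'. (m::nat\<Rightarrow>nat) i)"
  by (intro sum_mono2) auto

lemma off_disj: "j \<noteq> j' \<Longrightarrow> (\<Sum>i<j. m i) + m j \<le> (\<Sum>i<j'. (m::nat\<Rightarrow>nat) i) \<or> (\<Sum>i<j'. m i) + m j' \<le> (\<Sum>i<j. m i)"
proof -
  assume "j \<noteq> j'"
  then consider "Suc j \<le> j'" | "Suc j' \<le> j" by linarith
  then show ?thesis
  proof cases
    case 1 then show ?thesis using off_mono[OF 1, of m] by simp
  next
    case 2 then show ?thesis using off_mono[OF 2, of m] by simp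
  qed
qed

lemma off_le: "j < K \<Longrightarrow> (\<Sum>i<j. m i) + m j \<le> (\<Sum>i<K. (m::nat\<Rightarrow>nat) i)"
  using off_mono[of "Suc j" K m] by simp

lemma bsum_mat_in:
  assumes "\<forall>j<K. mat_in (m j) (Ms j)" "(\<Sum>j<K. m j) \<le> N"
  shows "mat_in N (bsum K m Ms)"
  unfolding mat_in_def bsum_def
proof (intro allI impI sum.neutral ballI)
  fix r s j assume "N \<le> r \<or> N \<le> s" "j \<in> {..<K}"
  then show "embed_block (\<Sum>j'<j. m j') (Ms j) r s = 0"
    using assms off_le[of j K m] by (intro eb_zero[of "m j"]) auto
qed

lemma eb_add: "embed_block off (\<lambda>r s. A r s + B r s) r s = embed_block off A r s + embed_block off B r s"
  unfolding embed_block_def by auto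
lemma eb_sc: "embed_block off (\<lambda>r s. c * A r s) r s = c * embed_block off A r s"
  unfolding embed_block_def by auto
lemma eb_adj: "embed_block off (\<lambda>r s. cnj (A s r)) r s = cnj (embed_block off A s r)"
  unfolding embed_block_def by auto

lemma bsum_add: "bsum K m (\<lambda>j. madd (Ms j) (Ns j)) = madd (bsum K m Ms) (bsum K m Ns)"
  unfolding bsum_def by (simp add: eb_add sum.distrib madd_def)

lemma bsum_sc: "bsum K m (\<lambda>j. msc c (Ms j)) = msc c (bsum K m Ms)"
  unfolding bsum_def by (simp add: eb_sc sum_distrib_left msc_def)

lemma bsum_adj: "bsum K m (\<lambda>j. madj (Ms j)) = madj (bsum K m Ms)"
  unfolding bsum_def by (simp add: eb_adj madj_def)

lemma bsum_mult:
  assumes A: "\<forall>j<K. mat_in (m j) (Ms j)" and B: "\<forall>j<K. mat_in (m j) (Ns j)" and N: "(\<Sum>j<K. m j) \<le> N"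
  shows "mmult N (bsum K m Ms) (bsum K m Ns) = bsum K m (\<lambda>j. mmult (m j) (Ms j) (Ns j))"
proof (intro ext)
  fix r c
  let ?o = "\<lambda>j. \<Sum>j'<j. m j'"
  show "mmult N (bsum K m Ms) (bsum K m Ns) r c = bsum K m (\<lambda>j. mmult (m j) (Ms j) (Ns j)) r c"
  proof (cases "r < N \<and> c < N")
    case True
    have "mmult N (bsum K m Ms) (bsum K m Ns) r c =
       (\<Sum>k<N. \<Sum>j<K. \<Sum>j'<K. embed_block (?o j) (Ms j) r k * embed_block (?o j') (Ns j') k c)"
      using True by (simp add: mmult_def bsum_def sum_product)
    also have "\<dots> = (\<Sum>j<K. \<Sum>j'<K. \<Sum>k<N. embed_block (?o j) (Ms j) r k * embed_block (?o j') (Ns j') k c)"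
      by (simp add: sum.swap[of _ "{..<N}"])
    also have "\<dots> = (\<Sum>j<K. \<Sum>k<N. embed_block (?o j) (Ms j) r k * embed_block (?o j) (Ns j) k c)"
    proof (rule sum.cong[OF refl])
      fix j assume j: "j \<in> {..<K}"
      have "(\<Sum>j'<K. \<Sum>k<N. embed_block (?o j) (Ms j) r k * embed_block (?o j') (Ns j') k c)
         = (\<Sum>j'<K. if j' = j then (\<Sum>k<N. embed_block (?o j) (Ms j) r k * embed_block (?o j) (Ns j) k c) else 0)"
      proof (rule sum.cong[OF refl])
        fix j' assume j': "j' \<in> {..<K}"
        show "(\<Sum>k<N. embed_block (?o j) (Ms j) r k * embed_block (?o j') (Ns j') k c)
           = (if j' = j then (\<Sum>k<N. embed_block (?o j) (Ms j) r k * embed_block (?o j) (Ns j) k c) else 0)"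
          using A B j j' off_disj[of j j' m] by (auto intro!: sum.neutral eb_disj[of "m j" _ "m j'"])
      qed
      also have "\<dots> = (\<Sum>k<N. embed_block (?o j) (Ms j) r k * embed_block (?o j) (Ns j) k c)"
        using j by (simp add: sum.delta')
      finally show "(\<Sum>j'<K. \<Sum>k<N. embed_block (?o j) (Ms j) r k * embed_block (?o j') (Ns j') k c)
         = (\<Sum>k<N. embed_block (?o j) (Ms j) r k * embed_block (?o j) (Ns j) k c)" .
    qed
    also have "\<dots> = bsum K m (\<lambda>j. mmult (m j) (Ms j) (Ns j)) r c"
      unfolding bsum_def
      using A B N off_le[of _ K m] by (intro sum.cong refl eb_mult) (auto intro: le_trans)
    finally show ?thesis .
  next
    case False
    have "mat_in N (bsum K m (\<lambda>j. mmult (m j) (Ms j) (Ns j)))"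
      using N by (intro bsum_mat_in) (auto simp: mat_in_mmult)
    then show ?thesis using False by (auto simp: mmult_def mat_in_def)
  qed
qed



lemma cis_eq_imp: "cis a = cis b \<Longrightarrow> \<exists>k::int. a = b + 2 * pi * k"
proof -
  assume "cis a = cis b"
  then have "exp (\<i> * complex_of_real a) = exp (\<i> * complex_of_real b)" by (simp add: cis_conv_exp)
  then obtain k :: int where k: "\<i> * complex_of_real a = \<i> * complex_of_real b + (of_int (2*k) * pi) * \<i>"
    using exp_eq by blast
  have "a = Im (\<i> * complex_of_real a)" by simp
  also have "\<dots> = b + 2 * pi * k" unfolding k by simp
  finally show ?thesis by blast
qed

lemma Tparam_range: "Tparam z \<in> {0..<1}"
  unfolding Tparam_def by (simp add: frac_lt_1)

lemma cis_Tparam: "cmod z = 1 \<Longrightarrow> cis (2 * pi * Tparam z) = z"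
proof -
  assume z: "cmod z = 1"
  then have z0: "z \<noteq> 0" by auto
  have "2 * pi * Tparam z = Arg z + 2 * pi * (- of_int \<lfloor>Arg z / (2*pi)\<rfloor>)"
    unfolding Tparam_def frac_def by (simp add: algebra_simps)
  then have "cis (2 * pi * Tparam z) = cis (Arg z) * cis (2 * pi * (- of_int \<lfloor>Arg z / (2*pi)\<rfloor>))"
    by (simp add: cis_mult)
  also have "cis (2 * pi * (- of_int \<lfloor>Arg z / (2*pi)\<rfloor>)) = 1"
    by (rule cis_multiple_2pi) (simp add: Ints_minus)
  finally show ?thesis using cis_Arg[OF z0] z by (simp add: sgn_div_norm)
qed

lemma Tparam_cis:
  fixes h :: "real \<Rightarrow> 'b"
  assumes s: "s \<in> {0..1}" and h: "h 0 = h 1"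
  shows "h (Tparam (cis (2 * pi * s))) = h s"
proof -
  let ?u = "Tparam (cis (2 * pi * s))"
  have u: "?u \<in> {0..<1}" by (rule Tparam_range)
  have "cis (2 * pi * ?u) = cis (2 * pi * s)" by (rule cis_Tparam) simp
  then obtain k :: int where k: "2 * pi * ?u = 2 * pi * s + 2 * pi * k" using cis_eq_imp by blast
  then have "2 * pi * ?u = 2 * pi * (s + k)" by (simp add: algebra_simps)
  then have k': "?u = s + k" using pi_gt_zero by simp
  have "k > -2" "k < 1" using u s k' by auto
  then consider "k = 0" | "k = -1" by linarith
  then show ?thesis
  proof cases
    case 1 then show ?thesis using k' by simp
  next
    case 2 then have "s = 1" "?u = 0" using k' u s by auto
    then show ?thesis using h by simp
  qed
qed

lemma cont_Tparam:
  fixes h :: "real \<Rightarrow> complex"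
  assumes hc: "continuous_on {0..1} h" and h: "h 0 = h 1"
  shows "continuous_on (sphere 0 1) (\<lambda>z. h (Tparam z))"
proof -
  let ?e = "\<lambda>s::real. cis (2 * pi * s)"
  have ce: "continuous_on UNIV ?e" by (intro continuous_intros)
  show ?thesis
  proof (subst continuous_on_closed_vimage, simp, intro allI impI)
    fix B :: "complex set" assume B: "closed B"
    have eq: "(\<lambda>z. h (Tparam z)) -` B \<inter> sphere 0 1 = ?e ` ({0..1} \<inter> h -` B)"
    proof
      show "(\<lambda>z. h (Tparam z)) -` B \<inter> sphere 0 1 \<subseteq> ?e ` ({0..1} \<inter> h -` B)"
      proof
        fix z assume z: "z \<in> (\<lambda>z. h (Tparam z)) -` B \<inter> sphere 0 1"
        then have "z = ?e (Tparam z)" using cis_Tparam by auto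
        moreover have "Tparam z \<in> {0..1} \<inter> h -` B" using z Tparam_range[of z] by auto
        ultimately show "z \<in> ?e ` ({0..1} \<inter> h -` B)" by blast
      qed
      show "?e ` ({0..1} \<inter> h -` B) \<subseteq> (\<lambda>z. h (Tparam z)) -` B \<inter> sphere 0 1"
        using Tparam_cis[OF _ h] by auto
    qed
    have "compact ({0..1::real} \<inter> ({0..1} \<inter> h -` B))"
      using continuous_closed_preimage[OF hc _ B] by (intro compact_Int_closed) auto
    then have "compact ({0..1} \<inter> h -` B)" by (simp add: Int_assoc[symmetric])
    then have "compact (?e ` ({0..1} \<inter> h -` B))"
      using ce by (intro compact_continuous_image) (auto intro: continuous_on_subset)
    then show "closed ((\<lambda>z. h (Tparam z)) -` B \<inter> sphere 0 1)" unfolding eq by (rule compact_imp_closed)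
  qed
qed



lemma mmult_cont:
  assumes "\<forall>r c. continuous_on X (\<lambda>y. A y r c)" "\<forall>r c. continuous_on X (\<lambda>y. B y r c)"
  shows "continuous_on X (\<lambda>y. mmult m (A y) (B y) r c)"
  unfolding mmult_def using assms by (cases "r < m \<and> c < m") (auto intro!: continuous_intros)

lemma madj_cont:
  assumes "\<forall>r c. continuous_on X (\<lambda>y. A y r c)"
  shows "continuous_on X (\<lambda>y. madj (A y) r c)"
  unfolding madj_def using assms by (auto intro!: continuous_intros)

lemma kron_cont:
  assumes "\<forall>r c. continuous_on X (\<lambda>y. W y r c)"
  shows "continuous_on X (\<lambda>y. kron_id n a (W y) r c)"
  unfolding kron_id_def using assms by (cases "r < a * n \<and> c < a * n \<and> r mod n = c mod n") auto

lemma dg_cont: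
  assumes L: "\<forall>p<a. continuous_on X (\<lambda>y. Lv y p)" and S: "\<forall>p<a. \<forall>y\<in>X. cmod (Lv y p) = 1"
    and f: "\<forall>r s. continuous_on {0..1} (\<lambda>t. f t r s)" and f01: "f 0 = f 1"
  shows "continuous_on X (\<lambda>y. dg n a (Lv y) f r c)"
proof (cases "r < a * n \<and> c < a * n \<and> r div n = c div n")
  case True
  then have p: "r div n < a" using lt_divmod by auto
  have "continuous_on X (\<lambda>y. (\<lambda>z. f (Tparam z) (r mod n) (c mod n)) (Lv y (r div n)))"
  proof (rule continuous_on_compose2[OF cont_Tparam[of "\<lambda>t. f t (r mod n) (c mod n)"]])
    show "continuous_on {0..1} (\<lambda>t. f t (r mod n) (c mod n))" using f by blast
    show "f 0 (r mod n) (c mod n) = f 1 (r mod n) (c mod n)" using f01 by simp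
    show "continuous_on X (\<lambda>y. Lv y (r div n))" using L p by blast
    show "(\<lambda>y. Lv y (r div n)) ` X \<subseteq> sphere 0 1" using S p by auto
  qed
  then show ?thesis using True unfolding dg_def evalT_def by simp
next
  case False then show ?thesis unfolding dg_def if_not_P[OF False] by simp
qed

lemma em_cont:
  assumes L: "\<forall>p<a. continuous_on X (\<lambda>y. Lv y p)" and S: "\<forall>p<a. \<forall>y\<in>X. cmod (Lv y p) = 1"
    and f: "\<forall>r s. continuous_on {0..1} (\<lambda>t. f t r s)" and f01: "f 0 = f 1"
    and W: "\<forall>r c. continuous_on X (\<lambda>y. W y r c)"
  shows "continuous_on X (\<lambda>y. em n a (Lv y) (W y) f r c)"
  unfolding em_def
  using dg_cont[OF L S f f01] kron_cont[OF W]
  by (intro mmult_cont allI madj_cont) auto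



lemma typeA_eq: "typeA_map K n L a lam w x = (\<lambda>i t. if i < L \<and> t \<in> {0..1} then
   bsum K (\<lambda>j. a i j * n j) (\<lambda>j. em (n j) (a i j) (\<lambda>p. lam i j p t) (w i j t) (x j)) else mzero)"
  unfolding typeA_map_def bsum_def block_off_def elem_map_em by simp

lemma bsum_cong: "(\<And>j. j < K \<Longrightarrow> Ms j = Ns j) \<Longrightarrow> bsum K m Ms = bsum K m Ns"
  unfolding bsum_def by (auto intro!: ext sum.cong)

lemma mat_in_mzero: "mat_in m mzero" unfolding mat_in_def mzero_def by simp

lemma carrierD:
  assumes "x \<in> alg_carrier K n" "j < K"
  shows "\<And>t. mat_in (n j) (x j t)" "\<And>r s. continuous_on {0..1} (\<lambda>t. x j t r s)" "x j 0 = x j 1"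
  using assms unfolding alg_carrier_def by auto

lemma em_ident: "em n a Lv (ident a) f = dg n a Lv f"
  by (rule em_comm) (simp_all add: kron_ident mmult_ident_left mmult_ident_right mat_in_dg madj_ident mat_in_ident)

lemma em_period:
  assumes "elem_data a \<sigma> lam w"
  shows "em n a (\<lambda>p. lam p 0) (w 0) f = em n a (\<lambda>p. lam p 1) (w 1) f"
proof -
  from assms have u: "\<forall>t\<in>{0..1}. unitary_mat a (w t)" unfolding elem_data_def by blast
  then have u1: "unitary_mat a (w 1)" by simp
  from assms u1 have d: "\<sigma> permutes {..<a}" "\<forall>p<a. lam (\<sigma> p) 0 = lam p 1"
    "unitary_mat a (w 1)" "w 0 = ident a" "w 1 = permmat a \<sigma>"
    unfolding elem_data_def by auto
  have "em n a (\<lambda>p. lam p 1) (w 1) f = dg n a (\<lambda>p. lam p 0) f"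
    unfolding d(5)
  proof (rule em_comm)
    show "mmult (a * n) (kron_id n a (permmat a \<sigma>)) (dg n a (\<lambda>p. lam p 1) f) =
      mmult (a * n) (dg n a (\<lambda>p. lam p 0) f) (kron_id n a (permmat a \<sigma>))"
      using d by (intro kron_dg_comm_perm) auto
    show "mmult a (permmat a \<sigma>) (madj (permmat a \<sigma>)) = ident a"
      using d(3,5) unfolding unitary_mat_def by simp
  qed
  then show ?thesis unfolding d(4) em_ident by simp
qed

lemma typeA_star_hom:
  assumes data: "\<forall>i<L. \<forall>j<K. elem_data (a i j) (\<sigma> i j) (lam i j) (w i j)"
    and sums: "\<forall>i<L. (\<Sum>j<K. a i j * n j) \<le> ls i"
  shows "star_hom K n L ls (typeA_map K n L a lam w)"
  unfolding star_hom_def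
proof (intro conjI ballI allI)
  fix x assume x: "x \<in> alg_carrier K n"
  note xc = carrierD[OF x]
  show "typeA_map K n L a lam w x \<in> alg_carrier L ls"
    unfolding alg_carrier_def
  proof (intro CollectI conjI allI impI)
    fix i and t :: real assume "L \<le> i \<or> t \<notin> {0..1}"
    then show "typeA_map K n L a lam w x i t = mzero" unfolding typeA_eq by auto
  next
    fix i and t :: real assume i: "i < L"
    show "mat_in (ls i) (typeA_map K n L a lam w x i t)"
      unfolding typeA_eq using sums i
      by (auto intro!: bsum_mat_in mat_in_em simp: mat_in_mzero)
  next
    fix i r s assume i: "i < L"
    have "continuous_on {0..1} (\<lambda>t. bsum K (\<lambda>j. a i j * n j) (\<lambda>j. em (n j) (a i j) (\<lambda>p. lam i j p t) (w i j t) (x j)) r s)"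
      unfolding bsum_def embed_block_def
    proof (intro continuous_on_sum)
      fix j assume j: "j \<in> {..<K}"
      have d: "elem_data (a i j) (\<sigma> i j) (lam i j) (w i j)" using data i j by auto
      have "continuous_on {0..1} (\<lambda>t. em (n j) (a i j) (\<lambda>p. lam i j p t) (w i j t) (x j) r' s')" for r' s'
        apply (rule em_cont)
        using d xc j unfolding elem_data_def by auto
      then show "continuous_on {0..1} (\<lambda>t. if (\<Sum>j'<j. a i j' * n j') \<le> r \<and> (\<Sum>j'<j. a i j' * n j') \<le> s then
           em (n j) (a i j) (\<lambda>p. lam i j p t) (w i j t) (x j) (r - (\<Sum>j'<j. a i j' * n j')) (s - (\<Sum>j'<j. a i j' * n j')) else 0)"
        by (cases "(\<Sum>j'<j. a i j' * n j') \<le> r \<and> (\<Sum>j'<j. a i j' * n j') \<le> s") auto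
    qed
    then show "continuous_on {0..1} (\<lambda>t. typeA_map K n L a lam w x i t r s)"
      by (rule continuous_on_eq) (auto simp: typeA_eq i)
  next
    fix i assume i: "i < L"
    have "bsum K (\<lambda>j. a i j * n j) (\<lambda>j. em (n j) (a i j) (\<lambda>p. lam i j p 0) (w i j 0) (x j))
        = bsum K (\<lambda>j. a i j * n j) (\<lambda>j. em (n j) (a i j) (\<lambda>p. lam i j p 1) (w i j 1) (x j))"
      using data i by (intro bsum_cong em_period) auto
    then show "typeA_map K n L a lam w x i 0 = typeA_map K n L a lam w x i 1"
      unfolding typeA_eq using i by simp
  qed
next
  fix x y assume x: "x \<in> alg_carrier K n" and y: "y \<in> alg_carrier K n"
  show "typeA_map K n L a lam w (alg_add x y) = alg_add (typeA_map K n L a lam w x) (typeA_map K n L a lam w y)"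
  proof (rule ext, rule ext)
    fix i and t :: real
    show "typeA_map K n L a lam w (alg_add x y) i t = alg_add (typeA_map K n L a lam w x) (typeA_map K n L a lam w y) i t"
    proof (cases "i < L \<and> t \<in> {0..1}")
      case True
      then show ?thesis unfolding typeA_eq alg_add_def
        using bsum_add[of K "\<lambda>j. a i j * n j"] by (simp add: em_add madd_def)
    next
      case False then show ?thesis by (auto simp: typeA_eq alg_add_def mzero_def)
    qed
  qed
  show "typeA_map K n L a lam w (alg_mult n x y) = alg_mult ls (typeA_map K n L a lam w x) (typeA_map K n L a lam w y)"
  proof (rule ext, rule ext)
    fix i and t :: real
    show "typeA_map K n L a lam w (alg_mult n x y) i t = alg_mult ls (typeA_map K n L a lam w x) (typeA_map K n L a lam w y) i t"
    proof (cases "i < L \<and> t \<in> {0..1}")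
      case True
      have "mmult (ls i) (bsum K (\<lambda>j. a i j * n j) (\<lambda>j. em (n j) (a i j) (\<lambda>p. lam i j p t) (w i j t) (x j)))
             (bsum K (\<lambda>j. a i j * n j) (\<lambda>j. em (n j) (a i j) (\<lambda>p. lam i j p t) (w i j t) (y j)))
          = bsum K (\<lambda>j. a i j * n j) (\<lambda>j. mmult (a i j * n j) (em (n j) (a i j) (\<lambda>p. lam i j p t) (w i j t) (x j))
                (em (n j) (a i j) (\<lambda>p. lam i j p t) (w i j t) (y j)))"
        using sums True by (intro bsum_mult) (auto simp: mat_in_em)
      also have "\<dots> = bsum K (\<lambda>j. a i j * n j) (\<lambda>j. em (n j) (a i j) (\<lambda>p. lam i j p t) (w i j t) (alg_mult n x y j))"
      proof (rule bsum_cong)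
        fix j assume j: "j < K"
        have "unitary_mat (a i j) (w i j t)" using data True j unfolding elem_data_def by auto
        then show "mmult (a i j * n j) (em (n j) (a i j) (\<lambda>p. lam i j p t) (w i j t) (x j))
                (em (n j) (a i j) (\<lambda>p. lam i j p t) (w i j t) (y j)) = 
                em (n j) (a i j) (\<lambda>p. lam i j p t) (w i j t) (alg_mult n x y j)"
          unfolding alg_mult_def unitary_mat_def by (intro em_mult) auto
      qed
      finally show ?thesis unfolding typeA_eq alg_mult_def using True by simp
    qed (auto simp: typeA_eq alg_mult_def)
  qed
next
  fix x c assume x: "x \<in> alg_carrier K n"
  show "typeA_map K n L a lam w (alg_smult c x) = alg_smult c (typeA_map K n L a lam w x)"
  proof (rule ext, rule ext)
    fix i and t :: real
    show "typeA_map K n L a lam w (alg_smult c x) i t = alg_smult c (typeA_map K n L a lam w x) i t"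
    proof (cases "i < L \<and> t \<in> {0..1}")
      case True
      then show ?thesis unfolding typeA_eq alg_smult_def
        using bsum_sc[of K "\<lambda>j. a i j * n j" c] by (simp add: em_sc msc_def)
    qed (auto simp: typeA_eq alg_smult_def mzero_def)
  qed
next
  fix x assume x: "x \<in> alg_carrier K n"
  show "typeA_map K n L a lam w (alg_star x) = alg_star (typeA_map K n L a lam w x)"
  proof (rule ext, rule ext)
    fix i and t :: real
    show "typeA_map K n L a lam w (alg_star x) i t = alg_star (typeA_map K n L a lam w x) i t"
    proof (cases "i < L \<and> t \<in> {0..1}")
      case True
      then show ?thesis unfolding typeA_eq alg_star_def
        by (simp add: em_adj[symmetric] bsum_adj)
    qed (auto simp: typeA_eq alg_star_def)
  qed
qed



lemma lift_exists:
  fixes lam :: "real \<Rightarrow> complex"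
  assumes "continuous_on {0..1} lam" "\<forall>t\<in>{0..1}. cmod (lam t) = 1"
  shows "\<exists>th. continuous_on {0..1} th \<and> (\<forall>t\<in>{0..1}. lam t = cis (th t))"
proof -
  have "contractible {0..1::real}" by (intro convex_imp_contractible) simp
  then obtain g where g: "continuous_on {0..1} g" "\<And>t. t \<in> {0..1} \<Longrightarrow> lam t = exp (g t)"
    using continuous_logarithm_on_contractible[OF assms(1)] assms(2) by (metis norm_zero zero_neq_one)
  have "lam t = cis (Im (g t))" if t: "t \<in> {0..1}" for t
  proof -
    have "cmod (lam t) = 1" using assms(2) t by blast
    then have "exp (Re (g t)) = 1" using g(2)[OF t] by (simp add: norm_exp_eq_Re)
    then have "Re (g t) = 0" by simp
    then have "g t = \<i> * complex_of_real (Im (g t))" by (simp add: complex_eq_iff)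
    then show ?thesis using g(2)[OF t] by (metis cis_conv_exp)
  qed
  moreover have "continuous_on {0..1} (\<lambda>t. Im (g t))" using g(1) by (intro continuous_intros)
  ultimately show ?thesis by blast
qed

lemma finite_delta:
  assumes "finite I" "\<forall>k\<in>I. \<exists>d>0. \<forall>s. \<bar>s - s0\<bar> < d \<longrightarrow> Q k s"
  shows "\<exists>d>0. \<forall>k\<in>I. \<forall>s. \<bar>s - (s0::real)\<bar> < d \<longrightarrow> Q k s"
  using assms
proof (induction I rule: finite_induct)
  case empty then show ?case by (auto intro: exI[of _ 1])
next
  case (insert k I)
  then obtain d1 where d1: "d1 > 0" "\<forall>k\<in>I. \<forall>s. \<bar>s - s0\<bar> < d1 \<longrightarrow> Q k s" by auto
  from insert obtain d2 where d2: "d2 > 0" "\<forall>s. \<bar>s - s0\<bar> < d2 \<longrightarrow> Q k s" by auto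
  show ?case using d1 d2 by (intro exI[of _ "min d1 d2"]) auto
qed

lemma vnorm_L2: "vnorm m v = L2_set (\<lambda>i. cmod (v i)) {..<m}"
  unfolding vnorm_def L2_set_def ..

lemma opnorm_le:
  assumes e: "e \<ge> 0" and M: "\<forall>r<m. \<forall>c<m. cmod (M r c) \<le> e"
  shows "opnorm m M \<le> real m * real m * e"
  unfolding opnorm_def
proof (rule cSup_least)
  have "vnorm m (\<lambda>_. 0) \<le> 1" by (simp add: vnorm_def)
  then show "{vnorm m (mvmult m M v) |v. vnorm m v \<le> 1} \<noteq> {}" by blast
  fix y assume "y \<in> {vnorm m (mvmult m M v) |v. vnorm m v \<le> 1}"
  then obtain v where y: "y = vnorm m (mvmult m M v)" and v: "vnorm m v \<le> 1" by auto
  have vk: "cmod (v k) \<le> 1" if "k < m" for k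
    using member_le_L2_set[of "{..<m}" k "\<lambda>i. cmod (v i)"] that v by (simp add: vnorm_L2)
  have "y \<le> (\<Sum>r<m. \<bar>cmod (mvmult m M v r)\<bar>)"
    unfolding y vnorm_L2 by (rule L2_set_le_sum_abs)
  also have "\<dots> \<le> (\<Sum>r<m. \<Sum>k<m. e)"
  proof (intro sum_mono)
    fix r assume r: "r \<in> {..<m}"
    have "\<bar>cmod (mvmult m M v r)\<bar> = cmod (\<Sum>k<m. M r k * v k)" by (simp add: mvmult_def)
    also have "\<dots> \<le> (\<Sum>k<m. cmod (M r k * v k))" by (rule norm_sum)
    also have "\<dots> \<le> (\<Sum>k<m. e)"
    proof (intro sum_mono)
      fix k assume k: "k \<in> {..<m}"
      have "cmod (M r k * v k) = cmod (M r k) * cmod (v k)" by (simp add: norm_mult)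
      also have "\<dots> \<le> e * 1" using M r k vk[of k] e by (intro mult_mono) auto
      finally show "cmod (M r k * v k) \<le> e" by simp
    qed
    finally show "\<bar>cmod (mvmult m M v r)\<bar> \<le> (\<Sum>k<m. e)" .
  qed
  also have "\<dots> = real m * real m * e" by simp
  finally show "y \<le> real m * real m * e" .
qed



lemma em_cong: "(\<forall>p<a. Lv p = Lv' p) \<Longrightarrow> em n a Lv W f = em n a Lv' W f"
proof -
  assume "\<forall>p<a. Lv p = Lv' p"
  then have "dg n a Lv f = dg n a Lv' f" unfolding dg_def by (auto intro!: ext simp: less_mult_imp_div_less)
  then show ?thesis unfolding em_def by simp
qed

lemma cont_snd01: "continuous_on {0..1} g \<Longrightarrow> continuous_on ({0..1::real}\<times>{0..1::real}) (\<lambda>z. g (snd z))"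
  by (rule continuous_on_compose2[of "{0..1}" g]) (auto intro: continuous_intros)

lemma unitary_ident: "unitary_mat a (ident a)"
  unfolding unitary_mat_def by (simp add: madj_ident mat_in_ident mmult_ident_left)

lemma permmat_id: "permmat a id = ident a"
  unfolding permmat_def ident_def by (auto intro!: ext)

lemma hS_range:
  fixes s t :: real
  assumes "s \<in> {0..1}" "t \<in> {0..1}"
  shows "(1-s)*t + s * max 0 (2*t-1) \<in> {0..1}"
proof -
  have a: "0 \<le> (1-s)*t" "0 \<le> s * max 0 (2*t-1)" using assms by auto
  have "(1-s)*t \<le> (1-s)*1" using assms by (intro mult_left_mono) auto
  moreover have "s * max 0 (2*t-1) \<le> s * 1" using assms by (intro mult_left_mono) auto
  ultimately show ?thesis using a by auto
qed



lemma homot_cont: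
  fixes LS :: "real \<Rightarrow> nat \<Rightarrow> nat \<Rightarrow> nat \<Rightarrow> real \<Rightarrow> complex" and WS :: "real \<Rightarrow> nat \<Rightarrow> nat \<Rightarrow> real \<Rightarrow> cmat"
  assumes x: "x \<in> alg_carrier K n"
    and Lc: "\<forall>i<L. \<forall>j<K. \<forall>p<a i j. continuous_on ({0..1}\<times>{0..1}) (\<lambda>z. LS (fst z) i j p (snd z))"
    and Ln: "\<forall>i<L. \<forall>j<K. \<forall>p<a i j. \<forall>z\<in>{0..1}\<times>{0..1}. cmod (LS (fst z) i j p (snd z)) = 1"
    and Wc: "\<forall>i<L. \<forall>j<K. \<forall>r c. continuous_on ({0..1}\<times>{0..1}) (\<lambda>z. WS (fst z) i j (snd z) r c)"
    and s0: "s0 \<in> {0..1}" and e: "\<epsilon> > 0"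
  shows "\<exists>\<delta>>0. \<forall>s\<in>{0..1}. \<bar>s - s0\<bar> < \<delta> \<longrightarrow>
     alg_norm L ls (alg_add (typeA_map K n L a (LS s) (WS s) x) (alg_smult (-1) (typeA_map K n L a (LS s0) (WS s0) x))) < \<epsilon>"
proof -
  let ?X = "{0..1::real}\<times>{0..1::real}"
  define F where "F i r c z = bsum K (\<lambda>j. a i j * n j) (\<lambda>j. em (n j) (a i j) (\<lambda>p. LS (fst z) i j p (snd z)) (WS (fst z) i j (snd z)) (x j)) r c" for i r c z
  note xc = carrierD[OF x]
  have Fc: "continuous_on ?X (F i r c)" if i: "i < L" for i r c
    unfolding F_def bsum_def embed_block_def
  proof (intro continuous_on_sum)
    fix j assume j: "j \<in> {..<K}"
    have "continuous_on ?X (\<lambda>z. em (n j) (a i j) (\<lambda>p. LS (fst z) i j p (snd z)) (WS (fst z) i j (snd z)) (x j) r' s')" for r' s'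
      by (rule em_cont) (use Lc Ln Wc xc i j in auto)
    then show "continuous_on ?X (\<lambda>z. if (\<Sum>j'<j. a i j' * n j') \<le> r \<and> (\<Sum>j'<j. a i j' * n j') \<le> c then
         em (n j) (a i j) (\<lambda>p. LS (fst z) i j p (snd z)) (WS (fst z) i j (snd z)) (x j) (r - (\<Sum>j'<j. a i j' * n j')) (c - (\<Sum>j'<j. a i j' * n j')) else 0)"
      by (cases "(\<Sum>j'<j. a i j' * n j') \<le> r \<and> (\<Sum>j'<j. a i j' * n j') \<le> c") auto
  qed
  define Nm where "Nm = (\<Sum>i<L. ls i)"
  define e' where "e' = \<epsilon> / (2 * (real Nm * real Nm + 1))"
  have e'p: "e' > 0" unfolding e'_def using e by (intro divide_pos_pos) (auto intro!: mult_pos_pos add_nonneg_pos)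
  have lsN: "ls i \<le> Nm" if "i < L" for i unfolding Nm_def using that by (intro member_le_sum) auto
  define Q where "Q k s = (case k of (i, r, c) \<Rightarrow> s \<in> {0..1} \<longrightarrow> (\<forall>t\<in>{0..1}. cmod (F i r c (s, t) - F i r c (s0, t)) < e'))" for k s
  define I where "I = {(i, r, c). i < L \<and> r < ls i \<and> c < ls i}"
  have fI: "finite I"
    by (rule finite_subset[of _ "{..<L} \<times> {..<Nm} \<times> {..<Nm}"]) (auto simp: I_def dest: lsN)
  have "\<forall>k\<in>I. \<exists>d>0. \<forall>s. \<bar>s - s0\<bar> < d \<longrightarrow> Q k s"
  proof
    fix k assume "k \<in> I"
    then obtain i r c where k: "k = (i, r, c)" and i: "i < L" unfolding I_def by auto
    have "uniformly_continuous_on ?X (F i r c)"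
      by (rule compact_uniformly_continuous[OF Fc[OF i]]) (intro compact_Times compact_Icc)
    then obtain d where d: "d > 0" "\<And>z z'. z \<in> ?X \<Longrightarrow> z' \<in> ?X \<Longrightarrow> dist z' z < d \<Longrightarrow> dist (F i r c z') (F i r c z) < e'"
      unfolding uniformly_continuous_on_def using e'p by metis
    show "\<exists>d>0. \<forall>s. \<bar>s - s0\<bar> < d \<longrightarrow> Q k s"
    proof (intro exI[of _ d] conjI allI impI)
      fix s assume s: "\<bar>s - s0\<bar> < d"
      show "Q k s" unfolding Q_def k
      proof (simp only: prod.case, intro impI ballI)
        fix t :: real assume "s \<in> {0..1}" "t \<in> {0..1}"
        moreover have "dist (s, t) (s0, t) = \<bar>s - s0\<bar>" by (simp add: dist_Pair_Pair dist_real_def)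
        ultimately have "dist (F i r c (s, t)) (F i r c (s0, t)) < e'" using d(2)[of "(s0,t)" "(s,t)"] s s0 by auto
        then show "cmod (F i r c (s, t) - F i r c (s0, t)) < e'" by (simp add: dist_norm)
      qed
    qed (fact d)
  qed
  from finite_delta[OF fI this] obtain \<delta> where \<delta>: "\<delta> > 0" "\<forall>k\<in>I. \<forall>s. \<bar>s - s0\<bar> < \<delta> \<longrightarrow> Q k s" by blast
  show ?thesis
  proof (intro exI[of _ \<delta>] conjI ballI impI)
    fix s assume s: "s \<in> {0..1}" "\<bar>s - s0\<bar> < \<delta>"
    let ?D = "alg_add (typeA_map K n L a (LS s) (WS s) x) (alg_smult (-1) (typeA_map K n L a (LS s0) (WS s0) x))"
    have "alg_norm L ls ?D \<le> real Nm * real Nm * e'"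
      unfolding alg_norm_def
    proof (rule cSup_least)
      show "{opnorm (ls i) (?D i t) |i t. i < L \<and> t \<in> {0..1}} \<union> {0} \<noteq> {}" by simp
      fix y assume "y \<in> {opnorm (ls i) (?D i t) |i t. i < L \<and> t \<in> {0..1}} \<union> {0}"
      then consider "y = 0" | i t where "y = opnorm (ls i) (?D i t)" "i < L" "t \<in> {0..1}" by auto
      then show "y \<le> real Nm * real Nm * e'"
      proof cases
        case 1 then show ?thesis using e'p by simp
      next
        case 2
        have ent: "?D i t r c = F i r c (s, t) - F i r c (s0, t)" for r c
          using 2 unfolding alg_add_def alg_smult_def typeA_eq F_def by simp
        have "opnorm (ls i) (?D i t) \<le> real (ls i) * real (ls i) * e'"
        proof (rule opnorm_le)
          show "0 \<le> e'" using e'p by simp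
          show "\<forall>r<ls i. \<forall>c<ls i. cmod (?D i t r c) \<le> e'"
          proof (intro allI impI)
            fix r c assume "r < ls i" "c < ls i"
            then have "(i, r, c) \<in> I" using 2 unfolding I_def by auto
            then have "Q (i, r, c) s" using \<delta>(2) s by blast
            then show "cmod (?D i t r c) \<le> e'" unfolding ent Q_def using s 2 by (auto intro: less_imp_le)
          qed
        qed
        also have "\<dots> \<le> real Nm * real Nm * e'"
          using lsN[OF 2(2)] e'p by (intro mult_right_mono mult_mono) auto
        finally show ?thesis using 2 by simp
      qed
    qed
    also have "\<dots> < \<epsilon>"
    proof -
      have "real Nm * real Nm * e' = \<epsilon> * (real Nm * real Nm) / (2 * (real Nm * real Nm + 1))"
        unfolding e'_def by simp
      also have "\<dots> < \<epsilon>"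
      proof -
        have gen: "\<epsilon> * M / (2 * (M + 1)) < \<epsilon>" if N: "0 \<le> M" for M :: real
        proof -
          have pos: "0 < 2 * (M + 1)" using N by simp
          have "\<epsilon> * M < \<epsilon> * (2 * (M + 1))"
            using e N by (intro mult_strict_left_mono) auto
          then show ?thesis using pos by (simp add: pos_divide_less_eq)
        qed
        show ?thesis by (rule gen) simp
      qed
      finally show ?thesis .
    qed
    finally show "alg_norm L ls ?D < \<epsilon>" .
  qed (fact \<delta>)
qed



theorem theorem3p3:
  fixes K L :: nat and n ls :: "nat \<Rightarrow> nat" and a :: "nat \<Rightarrow> nat \<Rightarrow> nat"
    and \<phi> :: "celt \<Rightarrow> celt"
  assumes "is_typeA K n L ls a \<phi>"
  shows "\<exists>\<psi>. is_typeB K n L ls a \<psi> \<and> homotopic K n L ls \<phi> \<psi>"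
proof -
  from assms obtain \<sigma> lam w where
    sums: "\<forall>i<L. (\<Sum>j<K. a i j * n j) \<le> ls i" and
    data: "\<forall>i<L. \<forall>j<K. elem_data (a i j) (\<sigma> i j) (lam i j) (w i j)" and
    phi: "\<forall>x\<in>alg_carrier K n. \<phi> x = typeA_map K n L a lam w x"
    unfolding is_typeA_def by blast
  define th where "th i j p = (SOME \<theta>. continuous_on {0..1} \<theta> \<and> (\<forall>t\<in>{0..1}. lam i j p t = cis (\<theta> t)))" for i j p
  have th: "continuous_on {0..1} (th i j p) \<and> (\<forall>t\<in>{0..1}. lam i j p t = cis (th i j p t))"
    if "i < L" "j < K" "p < a i j" for i j p
  proof -
    have "\<exists>\<theta>. continuous_on {0..1} \<theta> \<and> (\<forall>t\<in>{0..1}. lam i j p t = cis (\<theta> t))"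
      using data that unfolding elem_data_def by (intro lift_exists) auto
    then show ?thesis unfolding th_def by (rule someI_ex)
  qed
  define d where "d i j p = th i j p 1 - th i j (\<sigma> i j p) 0" for i j p
  have sig: "\<sigma> i j p < a i j" if "i < L" "j < K" "p < a i j" for i j p
    using data that unfolding elem_data_def by (meson lessThan_iff permutes_in_image)
  have cisd: "cis (d i j p) = 1" if ijp: "i < L" "j < K" "p < a i j" for i j p
  proof -
    have "cis (th i j p 1) = lam i j p 1" using th[OF ijp] by simp
    also have "\<dots> = lam i j (\<sigma> i j p) 0" using data ijp unfolding elem_data_def by auto
    also have "\<dots> = cis (th i j (\<sigma> i j p) 0)" using th[OF ijp(1,2) sig[OF ijp]] by simp
    finally show ?thesis unfolding d_def by (simp add: cis_divide[symmetric])
  qed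
  define lamS where "lamS s i j p t = cis ((1-s) * th i j p t + s * d i j p * min (2*t) 1)" for s i j p and t :: real
  define hS where "hS s t = (1-s)*t + s * max 0 (2*t-1)" for s t :: real
  define wS where "wS s i j t = w i j (hS s t)" for s i j t
  define \<Phi> where "\<Phi> s = typeA_map K n L a (lamS s) (wS s)" for s
  define \<psi> where "\<psi> = typeA_map K n L a (lamS 1) (\<lambda>i j t. ident (a i j))"
  have hSr: "hS s t \<in> {0..1}" if "s \<in> {0..1}" "t \<in> {0..1}" for s t
    unfolding hS_def using hS_range[OF that] .
  have hS01: "hS s 0 = 0" "hS s 1 = 1" for s unfolding hS_def by auto
  have dataS: "\<forall>i<L. \<forall>j<K. elem_data (a i j) (\<sigma> i j) (lamS s i j) (wS s i j)" if s: "s \<in> {0..1}" for s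
  proof (intro allI impI)
    fix i j assume ij: "i < L" "j < K"
    note dij = data[rule_format, OF ij] 
    show "elem_data (a i j) (\<sigma> i j) (lamS s i j) (wS s i j)"
      unfolding elem_data_def
    proof (intro conjI allI impI ballI)
      show "\<sigma> i j permutes {..<a i j}" using dij unfolding elem_data_def by blast
    next
      fix p assume p: "p < a i j"
      show "continuous_on {0..1} (lamS s i j p)" unfolding lamS_def
        using th[OF ij p] by (intro continuous_intros) auto
    next
      fix p t assume "p < a i j" "t \<in> {0..1::real}"
      show "cmod (lamS s i j p t) = 1" unfolding lamS_def by simp
    next
      fix p assume p: "p < a i j"
      have "lamS s i j p 1 = cis ((1-s) * th i j (\<sigma> i j p) 0 + d i j p)"
        unfolding lamS_def d_def by (simp add: algebra_simps)
      also have "\<dots> = cis ((1-s) * th i j (\<sigma> i j p) 0)"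
        using cisd[OF ij p] by (simp add: cis_mult[symmetric])
      also have "\<dots> = lamS s i j (\<sigma> i j p) 0" unfolding lamS_def by simp
      finally show "lamS s i j (\<sigma> i j p) 0 = lamS s i j p 1" by simp
    next
      fix r c
      show "continuous_on {0..1} (\<lambda>t. wS s i j t r c)" unfolding wS_def
      proof (rule continuous_on_compose2[of "{0..1}" "\<lambda>u. w i j u r c"])
        show "continuous_on {0..1} (\<lambda>u. w i j u r c)" using dij unfolding elem_data_def by blast
        show "continuous_on {0..1} (hS s)" unfolding hS_def by (intro continuous_intros)
        show "hS s ` {0..1} \<subseteq> {0..1}" using hSr s by auto
      qed
    next
      fix t :: real assume t: "t \<in> {0..1}"
      show "unitary_mat (a i j) (wS s i j t)" unfolding wS_def
        using dij hSr[OF s t] unfolding elem_data_def by blast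
    next
      show "wS s i j 0 = ident (a i j)" "wS s i j 1 = permmat (a i j) (\<sigma> i j)"
        unfolding wS_def hS01 using dij unfolding elem_data_def by auto
    qed
  qed
  have starS: "star_hom K n L ls (\<Phi> s)" if "s \<in> {0..1}" for s
    unfolding \<Phi>_def using typeA_star_hom[OF dataS[OF that] sums] .
  have Phi0: "\<Phi> 0 x = \<phi> x" if x: "x \<in> alg_carrier K n" for x
  proof -
    have "\<Phi> 0 x = typeA_map K n L a lam w x"
      unfolding \<Phi>_def typeA_eq
    proof (rule ext, rule ext)
      fix i and t :: real
      show "(if i < L \<and> t \<in> {0..1} then bsum K (\<lambda>j. a i j * n j) (\<lambda>j. em (n j) (a i j) (\<lambda>p. lamS 0 i j p t) (wS 0 i j t) (x j)) else mzero) =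
            (if i < L \<and> t \<in> {0..1} then bsum K (\<lambda>j. a i j * n j) (\<lambda>j. em (n j) (a i j) (\<lambda>p. lam i j p t) (w i j t) (x j)) else mzero)"
      proof (cases "i < L \<and> t \<in> {0..1}")
        case True
        have "bsum K (\<lambda>j. a i j * n j) (\<lambda>j. em (n j) (a i j) (\<lambda>p. lamS 0 i j p t) (wS 0 i j t) (x j))
            = bsum K (\<lambda>j. a i j * n j) (\<lambda>j. em (n j) (a i j) (\<lambda>p. lam i j p t) (w i j t) (x j))"
        proof (rule bsum_cong)
          fix j assume j: "j < K"
          have w0: "wS 0 i j t = w i j t" unfolding wS_def hS_def by simp
          have l0: "\<forall>p<a i j. lamS 0 i j p t = lam i j p t"
          proof (intro allI impI)
            fix p assume p: "p < a i j"
            have "lam i j p t = cis (th i j p t)" using th[of i j p] True j p by auto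
            then show "lamS 0 i j p t = lam i j p t" unfolding lamS_def by simp
          qed
          show "em (n j) (a i j) (\<lambda>p. lamS 0 i j p t) (wS 0 i j t) (x j) = em (n j) (a i j) (\<lambda>p. lam i j p t) (w i j t) (x j)"
            unfolding w0 by (rule em_cong) (use l0 in blast)
        qed
        then show ?thesis using True by simp
      next
        case False then show ?thesis by (simp only: if_not_P[OF False] if_False)
      qed
    qed
    then show ?thesis using phi x by simp
  qed
  have Phi1: "\<Phi> 1 x = \<psi> x" for x
    unfolding \<Phi>_def \<psi>_def typeA_eq
  proof (rule ext, rule ext)
    fix i and t :: real
    show "(if i < L \<and> t \<in> {0..1} then bsum K (\<lambda>j. a i j * n j) (\<lambda>j. em (n j) (a i j) (\<lambda>p. lamS 1 i j p t) (wS 1 i j t) (x j)) else mzero) =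
          (if i < L \<and> t \<in> {0..1} then bsum K (\<lambda>j. a i j * n j) (\<lambda>j. em (n j) (a i j) (\<lambda>p. lamS 1 i j p t) (ident (a i j)) (x j)) else mzero)"
    proof (cases "i < L \<and> t \<in> {0..1}")
      case True
      have "bsum K (\<lambda>j. a i j * n j) (\<lambda>j. em (n j) (a i j) (\<lambda>p. lamS 1 i j p t) (wS 1 i j t) (x j))
          = bsum K (\<lambda>j. a i j * n j) (\<lambda>j. em (n j) (a i j) (\<lambda>p. lamS 1 i j p t) (ident (a i j)) (x j))"
      proof (rule bsum_cong)
        fix j assume j: "j < K"
        note dij = data[rule_format, OF _ j, of i]
        show "em (n j) (a i j) (\<lambda>p. lamS 1 i j p t) (wS 1 i j t) (x j) = em (n j) (a i j) (\<lambda>p. lamS 1 i j p t) (ident (a i j)) (x j)"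
        proof (cases "t \<le> 1/2")
          case True
          then have "hS 1 t = 0" unfolding hS_def by simp
          then show ?thesis unfolding wS_def using dij \<open>i < L \<and> t \<in> {0..1}\<close> unfolding elem_data_def by auto
        next
          case False
          have l1: "\<forall>p<a i j. lamS 1 i j p t = 1"
            using False cisd \<open>i < L \<and> t \<in> {0..1}\<close> j unfolding lamS_def by auto
          have u: "unitary_mat (a i j) (wS 1 i j t)"
            using dataS[of 1] \<open>i < L \<and> t \<in> {0..1}\<close> j unfolding elem_data_def by auto
          have "em (n j) (a i j) (\<lambda>p. lamS 1 i j p t) (wS 1 i j t) (x j) = dg (n j) (a i j) (\<lambda>p. lamS 1 i j p t) (x j)"
            using u unfolding unitary_mat_def by (intro em_comm kron_dg_comm_const[OF l1]) auto
          also have "\<dots> = em (n j) (a i j) (\<lambda>p. lamS 1 i j p t) (ident (a i j)) (x j)"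
            by (simp add: em_ident)
          finally show ?thesis .
        qed
      qed
      then show ?thesis using True by simp
    next
      case False then show ?thesis by (simp only: if_not_P[OF False] if_False)
    qed
  qed
  have dataB: "\<forall>i<L. \<forall>j<K. elem_data (a i j) id (lamS 1 i j) (\<lambda>t. ident (a i j))"
  proof (intro allI impI)
    fix i j assume ij: "i < L" "j < K"
    have dS: "elem_data (a i j) (\<sigma> i j) (lamS 1 i j) (wS 1 i j)" using dataS[of 1] ij by auto
    show "elem_data (a i j) id (lamS 1 i j) (\<lambda>t. ident (a i j))"
      unfolding elem_data_def
    proof (intro conjI)
      show "id permutes {..<a i j}" by (rule permutes_id)
      show "\<forall>p<a i j. continuous_on {0..1} (lamS 1 i j p) \<and> (\<forall>t\<in>{0..1}. cmod (lamS 1 i j p t) = 1)"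
        using dS unfolding elem_data_def by blast
      show "\<forall>p<a i j. lamS 1 i j (id p) 0 = lamS 1 i j p 1"
        using cisd ij unfolding lamS_def by auto
      show "\<forall>r s. continuous_on {0..1} (\<lambda>t. ident (a i j) r s)" by simp
      show "\<forall>t\<in>{0..1}. unitary_mat (a i j) (ident (a i j))" by (simp add: unitary_ident)
      show "ident (a i j) = ident (a i j)" "ident (a i j) = permmat (a i j) id" by (simp_all add: permmat_id)
    qed
  qed
  have psiB: "is_typeB K n L ls a \<psi>"
    unfolding is_typeB_def
  proof (intro conjI)
    show "star_hom K n L ls \<psi>" unfolding \<psi>_def by (rule typeA_star_hom[OF dataB sums])
    show "\<forall>i<L. (\<Sum>j<K. a i j * n j) \<le> ls i" by (rule sums)
    show "\<exists>lam w. (\<forall>i<L. \<forall>j<K. elem_data (a i j) id (lam i j) (w i j)) \<and>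
        (\<forall>x\<in>alg_carrier K n. \<psi> x = typeA_map K n L a lam w x)"
      by (rule exI[of _ "lamS 1"], rule exI[of _ "\<lambda>i j t. ident (a i j)"]) (simp add: dataB \<psi>_def)
  qed
  have cont: "\<exists>\<delta>>0. \<forall>s\<in>{0..1}. \<bar>s - s0\<bar> < \<delta> \<longrightarrow>
            alg_norm L ls (alg_add (\<Phi> s x) (alg_smult (-1) (\<Phi> s0 x))) < \<epsilon>"
    if x: "x \<in> alg_carrier K n" and s0: "s0 \<in> {0..1}" and e: "\<epsilon> > 0" for x s0 \<epsilon>
    unfolding \<Phi>_def
  proof (rule homot_cont[OF x _ _ _ s0 e])
    show "\<forall>i<L. \<forall>j<K. \<forall>p<a i j. continuous_on ({0..1}\<times>{0..1}) (\<lambda>z. lamS (fst z) i j p (snd z))"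
    proof (intro allI impI)
      fix i j p assume ijp: "i < L" "j < K" "p < a i j"
      have tc: "continuous_on {0..1} (th i j p)" using th[OF ijp] by blast
      have "continuous_on ({0..1::real}\<times>{0..1::real}) (\<lambda>z. th i j p (snd z))"
        by (rule cont_snd01[OF tc])
      then show "continuous_on ({0..1}\<times>{0..1}) (\<lambda>z. lamS (fst z) i j p (snd z))"
        unfolding lamS_def by (intro continuous_intros)
    qed
    show "\<forall>i<L. \<forall>j<K. \<forall>p<a i j. \<forall>z\<in>{0..1}\<times>{0..1}. cmod (lamS (fst z) i j p (snd z)) = 1"
      unfolding lamS_def by simp
    show "\<forall>i<L. \<forall>j<K. \<forall>r c. continuous_on ({0..1}\<times>{0..1}) (\<lambda>z. wS (fst z) i j (snd z) r c)"
    proof (intro allI impI)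
      fix i j r c assume ij: "i < L" "j < K"
      show "continuous_on ({0..1}\<times>{0..1}) (\<lambda>z. wS (fst z) i j (snd z) r c)"
        unfolding wS_def
      proof (rule continuous_on_compose2[of "{0..1}" "\<lambda>u. w i j u r c"])
        show "continuous_on {0..1} (\<lambda>u. w i j u r c)" using data ij unfolding elem_data_def by blast
        show "continuous_on ({0..1}\<times>{0..1}) (\<lambda>z. hS (fst z) (snd z))" unfolding hS_def
          by (intro continuous_intros)
        show "(\<lambda>z. hS (fst z) (snd z)) ` ({0..1}\<times>{0..1}) \<subseteq> {0..1}" using hSr by auto
      qed
    qed
  qed
  have "homotopic K n L ls \<phi> \<psi>"
    unfolding homotopic_def
    by (rule exI[of _ \<Phi>]) (simp add: starS Phi0 Phi1 cont)
  then show ?thesis using psiB by blast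
qed

end
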